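(* For all $k,\ell\in\mathbb N$ the following hold in the $q$-shuffle algebra $\mathbb V$: $$[W_{-k},W_{-\ell}]=0,\qquad [W_{k+1},W_{\ell+1}]=0,$$ $$[W_{-k},W_{\ell+1}]+[W_{k+1},W_{-\ell}]=0,$$ $$[W_{-k},G_{\ell+1}]+[G_{k+1},W_{-\ell}]=0,$$ $$[W_{-k},\tilde G_{\ell+1}]+[\tilde G_{k+1},W_{-\ell}]=0,$$ $$[W_{k+1},G_{\ell+1}]+[G_{k+1},W_{\ell+1}]=0,$$ $$[W_{k+1},\tilde G_{\ell+1}]+[\tilde G_{k+1},W_{\ell+1}]=0,$$ $$[G_{k+1},G_{\ell+1}]=0,\qquad [\tilde G_{k+1},\tilde G_{\ell+1}]=0,$$ $$[\tilde G_{k+1},G_{\ell+1}]+[G_{k+1},\tilde G_{\ell+1}]=0.$$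
   Context: Let $\mathbb F$ be a field and let $q\in\mathbb F$ be nonzero and not a root of unity. Let $\mathbb V$ be the free associative $\mathbb F$-algebra on noncommuting $x,y$, with basis the words (including $1$). Juxtaposition denotes concatenation. Set $\langle x,x\rangle=\langle y,y\rangle=2$ and $\langle x,y\rangle=\langle y,x\rangle=-2$. The $q$-shuffle product $\star$ is the bilinear product determined as follows: - $1\star v=v\star 1=v$; - for nontrivial words $u=u_1\cdots u_r$ and $v=v_1\cdots v_s$, $$u\star v=u_1((u_2\cdots u_r)\star v)+v_1(u\star(v_2\cdots v_s))q^{\langle u_1,v_1\rangle+\cdots+\langle u_r,v_1\rangle}.$$ This makes $\mathbb V$ an associative algebra, the $q$-shuffle algebra. Write $[a,b]=a\star b-b\star a$. For $k\in\mathbb N$: - $W_{-k}=xyx\cdots x$ is the alternating word of length $2k+1$ beginning and ending with $x$; - $W_{k+1}=yxy\cdots y$ is the alternating word of length $2k+1$ beginning and ending with $y$; - $G_k=yxyx\cdots yx$ is the word of length $2k$; - $\tilde G_k=xyxy\cdots xy$ is the word of length $2k$; - $G_0=\tilde G_0=1$. *)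

theory Defs
  imports Main "HOL-Library.Function_Algebras"
begin

text \<open>Elements of the free algebra V are represented by their coefficient functions
  (word \<Rightarrow> field element); finitely supported ones are the actual elements.\<close>

datatype letter = X | Y

type_synonym word = "letter list"

definition pair :: "letter \<Rightarrow> letter \<Rightarrow> int" where
  "pair a b = (if a = b then 2 else -2)"

definition wd :: "word \<Rightarrow> (word \<Rightarrow> 'a::field)" where
  "wd u = (\<lambda>w. if w = u then 1 else 0)"

definition prep :: "letter \<Rightarrow> (word \<Rightarrow> 'a::field) \<Rightarrow> (word \<Rightarrow> 'a)" where
  "prep a F = (\<lambda>w. case w of [] \<Rightarrow> 0 | c # w' \<Rightarrow> (if c = a then F w' else 0))"

fun qsh :: "'a::field \<Rightarrow> word \<Rightarrow> word \<Rightarrow> (word \<Rightarrow> 'a)" where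
  "qsh q [] v = wd v"
| "qsh q (a # u) [] = wd (a # u)"
| "qsh q (a # u) (b # v) =
     (\<lambda>w. prep a (qsh q u (b # v)) w
          + prep b (qsh q (a # u) v) w * q powi (\<Sum>c\<leftarrow>a # u. pair c b))"

definition qstar :: "'a::field \<Rightarrow> (word \<Rightarrow> 'a) \<Rightarrow> (word \<Rightarrow> 'a) \<Rightarrow> (word \<Rightarrow> 'a)" where
  "qstar q f g = (\<lambda>w. \<Sum>(u, v) \<in> {(u, v). length u + length v = length w}.
                        f u * g v * qsh q u v w)"

definition comm :: "'a::field \<Rightarrow> (word \<Rightarrow> 'a) \<Rightarrow> (word \<Rightarrow> 'a) \<Rightarrow> (word \<Rightarrow> 'a)" where
  "comm q f g = (\<lambda>w. qstar q f g w - qstar q g f w)"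

fun other :: "letter \<Rightarrow> letter" where
  "other X = Y" | "other Y = X"

fun alt :: "letter \<Rightarrow> nat \<Rightarrow> word" where
  "alt a 0 = []"
| "alt a (Suc n) = a # alt (other a) n"

definition Wm :: "nat \<Rightarrow> word" where "Wm k = alt X (2 * k + 1)"   (* W_{-k} *)
definition Wp :: "nat \<Rightarrow> word" where "Wp k = alt Y (2 * k + 1)"   (* W_{k+1} *)
definition G :: "nat \<Rightarrow> word" where "G k = alt Y (2 * k)"
definition Gt :: "nat \<Rightarrow> word" where "Gt k = alt X (2 * k)"

end

theory Submission
  imports Defs
begin

declare qsh.simps[simp del]

lemma other_other[simp]: "other (other a) = a" by (cases a) auto
lemma other_neq[simp]: "other a \<noteq> a" "a \<noteq> other a" by (cases a; simp)+
lemma letter_cases: "c = a \<or> c = other a" by (cases a; cases c) auto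

lemma pair_simps[simp]: "pair a a = 2" "pair a (other a) = -2" "pair (other a) a = -2"
  by (simp_all add: pair_def)

definition wt :: "word \<Rightarrow> letter \<Rightarrow> int" where "wt u b = (\<Sum>x\<leftarrow>u. pair x b)"
lemma wt_Nil[simp]: "wt [] b = 0" by (simp add: wt_def)
lemma wt_Cons[simp]: "wt (x # u) b = pair x b + wt u b" by (simp add: wt_def)

definition Od :: "letter \<Rightarrow> nat \<Rightarrow> word" where "Od a k = alt a (2*k+1)"
definition Ev :: "letter \<Rightarrow> nat \<Rightarrow> word" where "Ev a k = alt a (2*k)"

lemma Od_cons[simp]: "Od a k = a # Ev (other a) k" by (simp add: Od_def Ev_def)
lemma Ev_0[simp]: "Ev a 0 = []" by (simp add: Ev_def)
lemma Ev_Suc[simp]: "Ev a (Suc k) = a # Od (other a) k"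
  by (simp add: Od_def Ev_def)
lemma Ev_eq_Nil[simp]: "(Ev a k = []) = (k = 0)" by (cases k) auto

lemma wt_Ev[simp]: "wt (Ev a k) c = 0"
proof (induction k)
  case 0 then show ?case by simp
next
  case (Suc k) then show ?case by (cases a; cases c) (simp_all add: pair_def)
qed

lemma qsh_Nil1[simp]: "qsh q [] v = wd v" by (simp add: qsh.simps)
lemma qsh_Nil2[simp]: "qsh q u [] = wd u" by (cases u) (simp_all add: qsh.simps)

lemma peel[simp]: "qsh q (a # u) (b # v) (c # w) =
   (if a = c then qsh q u (b # v) w else 0) + (if b = c then q powi wt (a # u) b * qsh q (a # u) v w else 0)"
  by (simp add: qsh.simps prep_def wt_def)

lemma wd_cons[simp]: "wd (a # u) (c # w) = (if a = c then wd u w else 0)"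
  by (simp add: wd_def)
lemma wd_nil_cons[simp]: "wd [] (c # w) = 0" by (simp add: wd_def)
lemma wd_nil_nil[simp]: "wd u [] = (if u = [] then 1 else 0)" by (simp add: wd_def)

lemma qsh_Nilw[simp]: "qsh q u v [] = (if u = [] \<and> v = [] then 1 else 0)"
  by (cases u; cases v) (simp_all add: qsh.simps prep_def wd_def)

definition cm :: "'a::field \<Rightarrow> word \<Rightarrow> word \<Rightarrow> word \<Rightarrow> 'a" where
  "cm q u v w = qsh q u v w - qsh q v u w"


context fixes q :: "'a::field" begin

definition "F1 a k l w = cm q (Od a k) (Od a l) w"
definition "F2 a k l w = cm q (Od a k) (Od (other a) l) w + cm q (Od (other a) k) (Od a l) w"
definition "F3 a k l w = cm q (Od a k) (Ev (other a) (Suc l)) w + cm q (Ev (other a) (Suc k)) (Od a l) w"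
definition "F4 a k l w = cm q (Od a k) (Ev a (Suc l)) w + cm q (Ev a (Suc k)) (Od a l) w"
definition "F5 a k l w = cm q (Ev a k) (Ev a l) w"
definition "F6 a k l w = cm q (Ev a (Suc k)) (Ev (other a) (Suc l)) w + cm q (Ev (other a) (Suc k)) (Ev a (Suc l)) w"
definition "Q1 a k l w = q^2 * qsh q (Od a k) (Ev (other a) l) w - qsh q (Ev (other a) l) (Od a k) w
   - q^2 * qsh q (Od a l) (Ev (other a) k) w + qsh q (Ev (other a) k) (Od a l) w"
definition "Q2 a k l w = qsh q (Od a k) (Ev a l) w - q^2 * qsh q (Ev a l) (Od a k) w
   - qsh q (Od a l) (Ev a k) w + q^2 * qsh q (Ev a k) (Od a l) w"
definition "E12 a k l w = cm q (Ev (other a) k) (Ev a (Suc l)) w + cm q (Ev a (Suc k)) (Ev (other a) l) w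
   + q^2 * qsh q (Od a k) (Od (other a) l) w - qsh q (Od (other a) l) (Od a k) w
   + qsh q (Od (other a) k) (Od a l) w - q^2 * qsh q (Od a l) (Od (other a) k) w"
definition "E34 a k l w = qsh q (Ev (other a) (Suc k)) (Ev a (Suc l)) w
   - q^2 * qsh q (Ev a (Suc l)) (Ev (other a) (Suc k)) w
   - qsh q (Ev (other a) (Suc l)) (Ev a (Suc k)) w + q^2 * qsh q (Ev a (Suc k)) (Ev (other a) (Suc l)) w
   + q^2 * cm q (Od a (Suc k)) (Od (other a) l) w - q^2 * cm q (Od a (Suc l)) (Od (other a) k) w"
definition "R1 a k w = q^2 * cm q (Od a 0) (Od (other a) k) w
   - (q^2 - 1) * (wd (Ev a (Suc k)) w - wd (Ev (other a) (Suc k)) w)"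

lemmas fdefs = F1_def F2_def F3_def F4_def F5_def F6_def Q1_def Q2_def E12_def E34_def R1_def cm_def


lemma F1a: "F1 a k l (a # w) = Q1 a k l w" by (simp add: fdefs algebra_simps)
lemma F1b: "F1 a k l (other a # w) = 0" by (simp add: fdefs)
lemma F2a: "q \<noteq> 0 \<Longrightarrow> F2 a k l (a # w) = inverse (q^2) * Q2 (other a) k l w"
  by (simp add: fdefs field_simps power_int_minus)
lemma F2b: "q \<noteq> 0 \<Longrightarrow> F2 a k l (other a # w) = inverse (q^2) * Q2 a k l w"
  by (simp add: fdefs field_simps power_int_minus)
lemma F3a: "F3 a k l (a # w) = F5 (other a) k (Suc l) w + F5 (other a) (Suc k) l w"
  by (simp add: fdefs algebra_simps)
lemma F3b: "q \<noteq> 0 \<Longrightarrow> F3 a k l (other a # w) = (1 + inverse (q^2)) * F1 a k l w"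
  by (simp add: fdefs field_simps power_int_minus)
lemma F4a: "F4 a k l (a # w) = E12 a k l w" by (simp add: fdefs algebra_simps)
lemma F4b: "F4 a k l (other a # w) = 0" by (simp add: fdefs)
lemma F5a: "F5 a k l (a # w) = (if 0 < k \<and> 0 < l then F3 (other a) (k - 1) (l - 1) w else 0)"
  by (cases k; cases l) (simp_all add: fdefs algebra_simps)
lemma F5b: "F5 a k l (other a # w) = 0"
  by (cases k; cases l) (simp_all add: fdefs)
lemma F6a: "F6 a k l (a # w) = F4 (other a) k l w" by (simp add: fdefs algebra_simps)
lemma F6b: "F6 a k l (other a # w) = F4 a k l w" by (simp add: fdefs algebra_simps)
lemma Q1a: "Q1 a k l (a # w) = (1 + q^2) * F5 (other a) k l w"
  by (cases k; cases l) (simp_all add: fdefs algebra_simps)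
lemma Q1b: "q \<noteq> 0 \<Longrightarrow> Q1 a k l (other a # w) = (if 0 < l then F1 a k (l - 1) w else 0) + (if 0 < k then F1 a (k - 1) l w else 0)"
  by (cases k; cases l) (simp_all add: fdefs field_simps power_int_minus)
lemma Q2a: "q \<noteq> 0 \<Longrightarrow> Q2 a k l (a # w) = (if 0 < k \<and> 0 < l then E34 a (k - 1) (l - 1) w
   else if 0 < k then - R1 a (k - 1) w else if 0 < l then R1 a (l - 1) w else 0)"
  by (cases k; cases l) (simp_all add: fdefs field_simps power_int_minus)
lemma Q2b: "Q2 a k l (other a # w) = 0"
  by (cases k; cases l) (simp_all add: fdefs)
lemma E12a: "q \<noteq> 0 \<Longrightarrow> E12 a k l (a # w) = (1 + inverse (q^2)) * Q2 (other a) k l w"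
  by (cases k; cases l) (simp_all add: fdefs field_simps power_int_minus)
lemma E12b: "q \<noteq> 0 \<Longrightarrow> E12 a k l (other a # w) = (if 0 < k then F4 a (k - 1) l w else 0) + (if 0 < l then F4 a k (l - 1) w else 0)"
  by (cases k; cases l) (simp_all add: fdefs field_simps power_int_minus)
lemma E34a: "q \<noteq> 0 \<Longrightarrow> E34 a k l (a # w) = (1 + q^2) * F4 (other a) k l w"
  by (simp add: fdefs field_simps power_int_minus)
lemma E34b: "q \<noteq> 0 \<Longrightarrow> E34 a k l (other a # w) = Q2 a k (Suc l) w + Q2 a (Suc k) l w"
  by (simp add: fdefs field_simps power_int_minus)
lemma R1a: "q \<noteq> 0 \<Longrightarrow> R1 a k (a # w) = 0"
  by (simp add: fdefs field_simps power_int_minus)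
lemma R1b: "q \<noteq> 0 \<Longrightarrow> R1 a k (other a # w) = Q2 a 0 k w"
  by (simp add: fdefs field_simps power_int_minus)

end

definition Sall :: "'a::field \<Rightarrow> word \<Rightarrow> bool" where
  "Sall q w \<longleftrightarrow> (\<forall>a k l. F1 q a k l w = 0 \<and> F2 q a k l w = 0 \<and> F3 q a k l w = 0 \<and> F4 q a k l w = 0 \<and> F5 q a k l w = 0 \<and> F6 q a k l w = 0 \<and> Q1 q a k l w = 0 \<and> Q2 q a k l w = 0 \<and> E12 q a k l w = 0 \<and> E34 q a k l w = 0) \<and> (\<forall>a k. R1 q a k w = 0)"

lemma Sall_Nil: "Sall q []"
  unfolding Sall_def by (auto simp: fdefs)

lemma Sall_step:
  assumes q0: "q \<noteq> 0" and S: "Sall q w"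
  shows "Sall q (c # w)"
proof -
  have h: "\<And>a k l. F1 q a k l w = 0" "\<And>a k l. F2 q a k l w = 0" "\<And>a k l. F3 q a k l w = 0" "\<And>a k l. F4 q a k l w = 0" "\<And>a k l. F5 q a k l w = 0" "\<And>a k l. F6 q a k l w = 0" "\<And>a k l. Q1 q a k l w = 0" "\<And>a k l. Q2 q a k l w = 0" "\<And>a k l. E12 q a k l w = 0" "\<And>a k l. E34 q a k l w = 0"
    "\<And>a k. R1 q a k w = 0" using S unfolding Sall_def by blast+
  show ?thesis
    unfolding Sall_def
  proof (intro allI conjI)
    fix a k l
    have c: "c = a \<or> c = other a" by (rule letter_cases)
    show "F1 q a k l (c # w) = 0" using c by (elim disjE) (simp_all add: F1a F1b q0 h)
    show "F2 q a k l (c # w) = 0" using c by (elim disjE) (simp_all add: F2a F2b q0 h)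
    show "F3 q a k l (c # w) = 0" using c by (elim disjE) (simp_all add: F3a F3b q0 h)
    show "F4 q a k l (c # w) = 0" using c by (elim disjE) (simp_all add: F4a F4b q0 h)
    show "F5 q a k l (c # w) = 0" using c by (elim disjE) (simp_all add: F5a F5b q0 h)
    show "F6 q a k l (c # w) = 0" using c by (elim disjE) (simp_all add: F6a F6b q0 h)
    show "Q1 q a k l (c # w) = 0" using c by (elim disjE) (simp_all add: Q1a Q1b q0 h)
    show "Q2 q a k l (c # w) = 0" using c by (elim disjE) (simp_all add: Q2a Q2b q0 h)
    show "E12 q a k l (c # w) = 0" using c by (elim disjE) (simp_all add: E12a E12b q0 h)
    show "E34 q a k l (c # w) = 0" using c by (elim disjE) (simp_all add: E34a E34b q0 h)
  next
    fix a k
    have c: "c = a \<or> c = other a" by (rule letter_cases)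
    show "R1 q a k (c # w) = 0" using c by (elim disjE) (simp_all add: R1a R1b q0 h)
  qed
qed

lemma Sall_all: "q \<noteq> 0 \<Longrightarrow> Sall q w"
  by (induction w) (simp_all add: Sall_Nil Sall_step)


lemma qsh_len: "length w \<noteq> length u + length v \<Longrightarrow> qsh q u v w = 0"
proof (induction w arbitrary: u v)
  case Nil then show ?case by simp
next
  case (Cons c w)
  show ?case
  proof (cases u)
    case Nil then show ?thesis using Cons.prems by (auto simp: wd_def)
  next
    case (Cons a u')
    show ?thesis
    proof (cases v)
      case Nil then show ?thesis using Cons.prems \<open>u = a # u'\<close> by (auto simp: wd_def)
    next
      case (Cons b v')
      then show ?thesis using Cons.IH Cons.prems \<open>u = a # u'\<close> by simp
    qed
  qed
qed

lemma finite_letter: "finite (UNIV :: letter set)"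
proof -
  have "UNIV = {X, Y}" using letter.exhaust by auto
  then show ?thesis by (metis finite.emptyI finite.insertI)
qed

lemma finite_pairs: "finite {(u::word, v::word). length u + length v = n}"
proof -
  have "{(u::word, v::word). length u + length v = n} \<subseteq>
        {xs. set xs \<subseteq> UNIV \<and> length xs \<le> n} \<times> {xs. set xs \<subseteq> UNIV \<and> length xs \<le> n}" by auto
  moreover have "finite ({xs::word. set xs \<subseteq> UNIV \<and> length xs \<le> n} \<times> {xs::word. set xs \<subseteq> UNIV \<and> length xs \<le> n})"
    using finite_lists_length_le[OF finite_letter] by blast
  ultimately show ?thesis by (rule finite_subset)
qed

lemma qstar_wd: "qstar q (wd u) (wd v) = qsh q u v"
proof (rule ext)
  fix w
  have e: "(\<lambda>(u', v'). wd u u' * wd v v' * qsh q u' v' w) = (\<lambda>x. if x = (u, v) then qsh q u v w else 0)"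
    by (auto simp: wd_def fun_eq_iff)
  show "qstar q (wd u) (wd v) w = qsh q u v w"
    unfolding qstar_def e using finite_pairs[of "length w"] qsh_len[of w u v q]
    by (auto simp: sum.delta)
qed

lemma br_eq: "comm q (wd u) (wd v) = (\<lambda>w. cm q u v w)"
  by (simp add: comm_def qstar_wd cm_def)

lemma Wm_Od: "Wm k = Od X k" by (simp add: Wm_def Od_def del: Od_cons)
lemma Wp_Od: "Wp k = Od Y k" by (simp add: Wp_def Od_def del: Od_cons)
lemma G_Ev: "G k = Ev Y k" by (simp add: G_def Ev_def del: Ev_Suc Ev_0)
lemma Gt_Ev: "Gt k = Ev X k" by (simp add: Gt_def Ev_def del: Ev_Suc Ev_0)

theorem proposition5p10:
  fixes q :: "'a::field" and k l :: nat
  assumes "q \<noteq> 0" and "\<forall>n>0. q ^ n \<noteq> 1"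
  defines "br \<equiv> \<lambda>u v. comm q (wd u) (wd v)"
  shows "br (Wm k) (Wm l) = 0 \<and>
         br (Wp k) (Wp l) = 0 \<and>
         br (Wm k) (Wp l) + br (Wp k) (Wm l) = 0 \<and>
         br (Wm k) (G (l + 1)) + br (G (k + 1)) (Wm l) = 0 \<and>
         br (Wm k) (Gt (l + 1)) + br (Gt (k + 1)) (Wm l) = 0 \<and>
         br (Wp k) (G (l + 1)) + br (G (k + 1)) (Wp l) = 0 \<and>
         br (Wp k) (Gt (l + 1)) + br (Gt (k + 1)) (Wp l) = 0 \<and>
         br (G (k + 1)) (G (l + 1)) = 0 \<and>
         br (Gt (k + 1)) (Gt (l + 1)) = 0 \<and>
         br (Gt (k + 1)) (G (l + 1)) + br (G (k + 1)) (Gt (l + 1)) = 0"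
proof -
  have S: "\<And>w. Sall q w" using assms(1) by (rule Sall_all)
  have h: "\<And>a k l w. F1 q a k l w = 0" "\<And>a k l w. F2 q a k l w = 0" "\<And>a k l w. F3 q a k l w = 0"
    "\<And>a k l w. F4 q a k l w = 0" "\<And>a k l w. F5 q a k l w = 0" "\<And>a k l w. F6 q a k l w = 0"
    using S unfolding Sall_def by blast+
  have b: "br = (\<lambda>u v w. cm q u v w)" unfolding br_def by (simp add: br_eq)
  have o: "other X = Y" "other Y = X" by simp_all
  show ?thesis
    unfolding b Wm_Od Wp_Od G_Ev Gt_Ev fun_eq_iff plus_fun_def zero_fun_def
    using h(1,5) h(2)[of X] h(3)[of X] h(3)[of Y] h(4)[of X] h(4)[of Y] h(6)[of X]
    unfolding F1_def F2_def F3_def F4_def F5_def F6_def o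
    by (simp del: Od_cons Ev_Suc Ev_0)
qed

end
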